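(* Let $f\in L^1(I)$, $(\varepsilon_n)$ positive with $\varepsilon_n\to0$, $N_n\ge2$ integers, $\mathbf q^n\in\mathbb R^{N_n-1}$ $\varepsilon_n$-feasible, and assume $\chi(\mathbf q^n,\varepsilon_n)\to\rho$ weakly-$\star$ in $L^\infty(I)$. Let $F^n=2\varepsilon_n\sum_{i=1}^{N_n-1}f_i^{n}\,\delta_{q^n_i}$ with $f_i^n=\frac1{2\varepsilon_n}\int_{q^n_i-\varepsilon_n}^{q^n_i+\varepsilon_n}f$. Then for every $v\in H^1_0(I)$, $\langle F^n,v\rangle=\sum_{i=1}^{N_n-1}2\varepsilon_n f_i^n v(q_i^n)\to\int_I\rho f v\,dx$; i.e. $F^n\to\rho f$ weakly-$\star$ in $H^{-1}(I)$.
   Context: $I=(0,1)$. For $\mathbf q=(q_1,\dots,q_{N-1})$ set $q_0=0$, $q_N=1$, $d_i=q_i-q_{i-1}-2\varepsilon$; $\mathbf q$ is $\varepsilon$-feasible if $d_i\ge0$ for $i=1,\dots,N$. $\chi(\mathbf q,\varepsilon)=\sum_{i=1}^{N-1}\mathbf 1_{(q_i-\varepsilon,q_i+\varepsilon)}+\mathbf 1_{(0,\varepsilon)}+\mathbf 1_{(1-\varepsilon,1)}$. $\delta_x$ is the Dirac mass at $x$. *)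

theory Defs
  imports "HOL-Analysis.Analysis"
begin

abbreviation I01 :: "real set" where "I01 \<equiv> {0<..<1}"

definition qext :: "(nat \<Rightarrow> real) \<Rightarrow> nat \<Rightarrow> nat \<Rightarrow> real" where
  "qext q N i = (if i = 0 then 0 else if i = N then 1 else q i)"

definition feasible :: "(nat \<Rightarrow> real) \<Rightarrow> nat \<Rightarrow> real \<Rightarrow> bool" where
  "feasible q N \<epsilon> \<longleftrightarrow> (\<forall>i\<in>{1..N}. qext q N i - qext q N (i - 1) - 2 * \<epsilon> \<ge> 0)"

definition chi :: "(nat \<Rightarrow> real) \<Rightarrow> nat \<Rightarrow> real \<Rightarrow> real \<Rightarrow> real" where
  "chi q N \<epsilon> x = (\<Sum>i=1..N-1. indicator {q i - \<epsilon><..<q i + \<epsilon>} x)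
      + indicator {0<..<\<epsilon>} x + indicator {1 - \<epsilon><..<1} x"

definition Linf_I :: "(real \<Rightarrow> real) \<Rightarrow> bool" where
  "Linf_I \<rho> \<longleftrightarrow> (\<lambda>x. indicator I01 x * \<rho> x) \<in> borel_measurable lborel
     \<and> (\<exists>C. AE x in lborel. x \<in> I01 \<longrightarrow> \<bar>\<rho> x\<bar> \<le> C)"

text \<open>Weak-star convergence in L^infinity(I) = dual of L^1(I).\<close>
definition weak_star_Linf :: "(nat \<Rightarrow> real \<Rightarrow> real) \<Rightarrow> (real \<Rightarrow> real) \<Rightarrow> bool" where
  "weak_star_Linf u \<rho> \<longleftrightarrow> (\<forall>g. set_integrable lborel I01 g \<longrightarrow>
      (\<lambda>n. LINT x:I01|lborel. u n x * g x) \<longlonglongrightarrow> (LINT x:I01|lborel. \<rho> x * g x))"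

text \<open>H^1_0(I), via the (continuous) representative: v is the primitive of an
  L^2(I) function vanishing at both endpoints.\<close>
definition H10 :: "(real \<Rightarrow> real) \<Rightarrow> bool" where
  "H10 v \<longleftrightarrow> (\<exists>g. (\<lambda>x. indicator I01 x * g x) \<in> borel_measurable lborel
      \<and> set_integrable lborel I01 (\<lambda>x. (g x)\<^sup>2)
      \<and> (\<forall>x\<in>{0..1}. v x = (LINT t:{0..x}|lborel. g t))
      \<and> v 1 = 0)"

end

theory Submission
  imports Defs
begin


lemma qext_lower:
  assumes "feasible q N e" "i \<le> N"
  shows "qext q N i \<ge> 2 * e * i"
  using assms(2)
proof (induction i)
  case 0 then show ?case by (simp add: qext_def)
next
  case (Suc i)
  have "qext q N (Suc i) - qext q N (Suc i - 1) - 2 * e \<ge> 0"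
    using assms(1) Suc.prems unfolding feasible_def by (metis One_nat_def atLeastAtMost_iff le_add1 plus_1_eq_Suc)
  then show ?case using Suc by (simp add: algebra_simps)
qed

lemma qext_upper:
  assumes "feasible q N e" "k \<le> N"
  shows "qext q N (N - k) \<le> 1 - 2 * e * k"
  using assms(2)
proof (induction k)
  case 0 then show ?case by (simp add: qext_def)
next
  case (Suc k)
  have "N - k \<in> {1..N}" using Suc.prems by auto
  then have "qext q N (N - k) - qext q N (N - k - 1) - 2 * e \<ge> 0"
    using assms(1) unfolding feasible_def by blast
  moreover have "N - k - 1 = N - Suc k" by simp
  ultimately show ?case using Suc by (simp add: algebra_simps)
qed

lemma q_bounds:
  assumes "feasible q N e" "1 \<le> i" "i \<le> N - 1" "e > 0"
  shows "2 * e \<le> q i" "q i \<le> 1 - 2 * e"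
proof -
  have qi: "qext q N i = q i" using assms by (simp add: qext_def)
  have "qext q N i \<ge> 2 * e * i" using qext_lower[OF assms(1)] assms by auto
  moreover have "2 * e * i \<ge> 2 * e" using assms by simp
  ultimately show "2 * e \<le> q i" using qi by linarith
  have "qext q N (N - (N - i)) \<le> 1 - 2 * e * (N - i)" using qext_upper[OF assms(1)] by auto
  moreover have "N - (N - i) = i" using assms by simp
  moreover have "real (N - i) \<ge> 1" using assms by simp
  moreover have "2 * e * real (N - i) \<ge> 2 * e" using assms calculation by simp
  ultimately show "q i \<le> 1 - 2 * e" using qi by simp
qed



lemma absle: "\<bar>y::real\<bar> \<le> 1 + y\<^sup>2"
proof (cases "\<bar>y\<bar> \<le> 1")
  case True then show ?thesis by (simp add: add_increasing2)
next
  case False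
  then have "\<bar>y\<bar> * 1 \<le> \<bar>y\<bar> * \<bar>y\<bar>" by (intro mult_left_mono) auto
  also have "\<dots> = y\<^sup>2" by (simp add: power2_eq_square abs_mult_self_eq)
  finally show ?thesis by simp
qed
lemma H10_props:
  assumes "H10 v"
  shows "continuous_on {0..1} v" "v 0 = 0" "v 1 = 0"
proof -
  obtain g where gm: "(\<lambda>x. indicator I01 x * g x) \<in> borel_measurable lborel"
    and g2: "set_integrable lborel I01 (\<lambda>x. (g x)\<^sup>2)"
    and vg: "\<forall>x\<in>{0..1}. v x = (LINT t:{0..x}|lborel. g t)" and v1: "v 1 = 0"
    using assms unfolding H10_def by blast
  show "v 1 = 0" by fact
  have i1: "integrable lborel (\<lambda>x. indicator I01 x * (1::real))"
    using integrable_indicator[of I01 lborel "1::real"] by simp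
  have i2: "integrable lborel (\<lambda>x. indicator I01 x * (g x)\<^sup>2)"
    using g2 unfolding set_integrable_def by simp
  have "integrable lborel (\<lambda>x. indicator I01 x * g x)"
  proof (rule Bochner_Integration.integrable_bound[OF Bochner_Integration.integrable_add[OF i1 i2] gm])
    show "AE x in lborel. norm (indicator I01 x * g x) \<le> norm (indicator I01 x * 1 + indicator I01 x * (g x)\<^sup>2)"
    proof (rule AE_I2)
      fix x
      show "norm (indicator I01 x * g x) \<le> norm (indicator I01 x * 1 + indicator I01 x * (g x)\<^sup>2)"
        using absle[of "g x"] by (cases "x \<in> I01") (simp_all add: indicator_def)
    qed
  qed
  then have gI: "set_integrable lborel I01 g" unfolding set_integrable_def by simp
  have g01: "set_integrable lborel {0,1} g"
  proof -
    have "integrable lborel (\<lambda>x. indicator {0::real} x *\<^sub>R g 0 + indicator {1} x *\<^sub>R g 1)"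
      by (intro Bochner_Integration.integrable_add integrable_indicator) auto
    moreover have "(\<lambda>x. indicator {0::real} x *\<^sub>R g 0 + indicator {1} x *\<^sub>R g 1) = (\<lambda>x. indicator {0,1} x *\<^sub>R g x)"
      by (auto simp: indicator_def)
    ultimately show ?thesis unfolding set_integrable_def by argo
  qed
  have "set_integrable lborel (I01 \<union> {0,1}) g"
    by (rule set_integrable_Un[OF gI g01]) auto
  moreover have "I01 \<union> {0,1} = {0..1::real}" by auto
  ultimately have gC: "set_integrable lborel {0..1} g" by simp
  have gH: "g integrable_on {0..1}" using set_borel_integral_eq_integral(1)[OF gC] .
  have vH: "\<forall>x\<in>{0..1}. v x = integral {0..x} g"
  proof
    fix x :: real assume x: "x \<in> {0..1}"
    have "set_integrable lborel {0..x} g"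
      by (rule set_integrable_subset[OF gC]) (use x in auto)
    then show "v x = integral {0..x} g" using vg x set_borel_integral_eq_integral(2) by metis
  qed
  then show "continuous_on {0..1} v"
    using continuous_on_eq[OF indefinite_integral_continuous_1[OF gH]] by metis
  show "v 0 = 0" using vH by simp
qed



lemma int_bmult:
  fixes f h :: "real \<Rightarrow> real"
  assumes fI: "integrable lborel (\<lambda>x. indicator I01 x * f x)"
    and hm: "(\<lambda>x. indicator I01 x * h x) \<in> borel_measurable lborel"
    and hb: "\<And>x. x \<in> I01 \<Longrightarrow> \<bar>h x\<bar> \<le> C"
  shows "integrable lborel (\<lambda>x. indicator I01 x * (h x * f x))"
proof (rule Bochner_Integration.integrable_bound[OF integrable_mult_right[OF fI, of C]])
  have "(\<lambda>x. indicator I01 x * (h x * f x)) = (\<lambda>x. (indicator I01 x * h x) * (indicator I01 x * f x))"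
    by (auto simp: indicator_def fun_eq_iff)
  moreover have "(\<lambda>x. (indicator I01 x * h x) * (indicator I01 x * f x)) \<in> borel_measurable lborel"
    using hm borel_measurable_integrable[OF fI] by (rule borel_measurable_times)
  ultimately show "(\<lambda>x. indicator I01 x * (h x * f x)) \<in> borel_measurable lborel" by simp
  show "AE x in lborel. norm (indicator I01 x * (h x * f x)) \<le> norm (C * (indicator I01 x * f x))"
  proof (rule AE_I2)
    fix x
    show "norm (indicator I01 x * (h x * f x)) \<le> norm (C * (indicator I01 x * f x))"
    proof (cases "x \<in> I01")
      case True
      then have "\<bar>h x\<bar> * \<bar>f x\<bar> \<le> \<bar>C\<bar> * \<bar>f x\<bar>" using hb[OF True] by (intro mult_right_mono) auto
      then show ?thesis using True by (simp add: abs_mult)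
    qed simp
  qed
qed



lemma key:
  fixes f v :: "real \<Rightarrow> real" and q :: "nat \<Rightarrow> real"
  assumes feas: "feasible q N \<epsilon>" and epos: "\<epsilon> > 0" and N2: "N \<ge> 2"
    and fI: "integrable lborel (\<lambda>x. indicator I01 x * f x)"
    and vm: "(\<lambda>x. indicator I01 x * v x) \<in> borel_measurable lborel"
    and Bv: "\<And>x. x \<in> {0..1} \<Longrightarrow> \<bar>v x\<bar> \<le> Bv"
    and v0: "v 0 = 0" and v1: "v 1 = 0"
    and modc: "\<And>x y. x \<in> {0..1} \<Longrightarrow> y \<in> {0..1} \<Longrightarrow> \<bar>x - y\<bar> < \<delta> \<Longrightarrow> \<bar>v x - v y\<bar> \<le> e"
    and ed: "\<epsilon> < \<delta>"
  shows "\<bar>(\<Sum>i=1..N - 1. 2 * \<epsilon> * ((1 / (2 * \<epsilon>)) * (LINT x:{q i - \<epsilon>..q i + \<epsilon>}|lborel. f x)) * v (q i))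
     - (LINT x:I01|lborel. chi q N \<epsilon> x * (f x * v x))\<bar>
     \<le> e * (LINT x:I01|lborel. chi q N \<epsilon> x * \<bar>f x\<bar>)"
proof -
  define Jo where "Jo i = {q i - \<epsilon><..<q i + \<epsilon>}" for i
  have qb: "2 * \<epsilon> \<le> q i \<and> q i \<le> 1 - 2 * \<epsilon>" if "i \<in> {1..N-1}" for i
    using q_bounds[OF feas _ _ epos] that by auto
  have JoI: "Jo i \<subseteq> I01" if "i \<in> {1..N-1}" for i using qb[OF that] epos unfolding Jo_def by auto
  have fm: "(\<lambda>x. indicator I01 x * f x) \<in> borel_measurable lborel" using borel_measurable_integrable[OF fI] .
  have indm: "(\<lambda>x. indicator I01 x * indicator (Jo i) x :: real) \<in> borel_measurable lborel" for i
    unfolding Jo_def by (intro borel_measurable_times borel_measurable_indicator) auto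
  have aI: "integrable lborel (\<lambda>x. indicator I01 x * (indicator (Jo i) x * f x))" for i
    by (rule int_bmult[where h="\<lambda>x. indicator (Jo i) x" and C=1, OF fI]) (use indm[of i] in \<open>auto simp: indicator_def\<close>)
  have intJ: "(LINT x:{q i - \<epsilon>..q i + \<epsilon>}|lborel. f x) = integral\<^sup>L lborel (\<lambda>x. indicator I01 x * (indicator (Jo i) x * f x))"
    if i: "i \<in> {1..N-1}" for i
  proof -
    have sub: "{q i - \<epsilon>..q i + \<epsilon>} \<subseteq> I01" using qb[OF i] epos by auto
    have "set_integrable lborel {q i - \<epsilon>..q i + \<epsilon>} f"
      by (rule set_integrable_subset[OF _ _ sub]) (use fI in \<open>auto simp: set_integrable_def\<close>)
    then have m1: "(\<lambda>x. indicator {q i - \<epsilon>..q i + \<epsilon>} x * f x) \<in> borel_measurable lborel"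
      unfolding set_integrable_def by (simp add: borel_measurable_integrable)
    have "(LINT x:{q i - \<epsilon>..q i + \<epsilon>}|lborel. f x) = integral\<^sup>L lborel (\<lambda>x. indicator {q i - \<epsilon>..q i + \<epsilon>} x * f x)"
      by (simp add: set_lebesgue_integral_def)
    also have "\<dots> = integral\<^sup>L lborel (\<lambda>x. indicator I01 x * (indicator (Jo i) x * f x))"
    proof (rule integral_cong_AE[OF m1 borel_measurable_integrable[OF aI]])
      have "AE x in lborel. x \<noteq> q i - \<epsilon> \<and> x \<noteq> q i + \<epsilon>"
        using AE_lborel_singleton[of "q i - \<epsilon>"] AE_lborel_singleton[of "q i + \<epsilon>"] by eventually_elim auto
      then show "AE x in lborel. indicator {q i - \<epsilon>..q i + \<epsilon>} x * f x = indicator I01 x * (indicator (Jo i) x * f x)"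
      proof eventually_elim
        case (elim x)
        then show ?case using sub JoI[OF i] unfolding Jo_def by (auto simp: indicator_def)
      qed
    qed
    finally show ?thesis .
  qed
  define P where "P x = (\<Sum>i=1..N-1. indicator I01 x * (indicator (Jo i) x * f x) * v (q i))" for x
  define Q where "Q x = indicator I01 x * (chi q N \<epsilon> x * (f x * v x))" for x
  define W where "W x = indicator I01 x * (chi q N \<epsilon> x * \<bar>f x\<bar>)" for x
  have chim: "(\<lambda>x. indicator I01 x * chi q N \<epsilon> x) \<in> borel_measurable lborel"
    unfolding chi_def by (intro borel_measurable_times borel_measurable_add borel_measurable_sum borel_measurable_indicator) auto
  have chib: "\<bar>chi q N \<epsilon> x\<bar> \<le> real N + 1" for x
  proof -
    have "chi q N \<epsilon> x \<ge> 0" unfolding chi_def by (intro add_nonneg_nonneg sum_nonneg) auto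
    moreover have "(\<Sum>i=1..N-1. indicator {q i - \<epsilon><..<q i + \<epsilon>} x) \<le> (\<Sum>i=1..N-1. (1::real))"
      by (intro sum_mono) (auto simp: indicator_def)
    then have "chi q N \<epsilon> x \<le> real (N - 1) + 2" unfolding chi_def by (auto simp: indicator_def)
    ultimately show ?thesis using N2 by auto
  qed
  have vb: "\<bar>v x\<bar> \<le> Bv" if "x \<in> I01" for x using Bv that by auto
  have fvI: "integrable lborel (\<lambda>x. indicator I01 x * (v x * f x))"
    by (rule int_bmult[where h=v, OF fI vm vb])
  have fvI': "integrable lborel (\<lambda>x. indicator I01 x * (f x * v x))"
    using fvI by (simp add: mult.commute)
  have QI: "integrable lborel Q"
    unfolding Q_def by (rule int_bmult[where h="chi q N \<epsilon>", OF fvI' chim chib])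
  have afI: "integrable lborel (\<lambda>x. indicator I01 x * \<bar>f x\<bar>)"
    using integrable_abs[OF fI] by (simp add: abs_mult)
  have WI: "integrable lborel W"
    unfolding W_def by (rule int_bmult[where h="chi q N \<epsilon>", OF afI chim chib])
  have PI: "integrable lborel P"
    unfolding P_def by (intro Bochner_Integration.integrable_sum integrable_mult_left aI)
  have Seq: "(\<Sum>i=1..N - 1. 2 * \<epsilon> * ((1 / (2 * \<epsilon>)) * (LINT x:{q i - \<epsilon>..q i + \<epsilon>}|lborel. f x)) * v (q i))
      = integral\<^sup>L lborel P"
  proof -
    have "(\<Sum>i=1..N - 1. 2 * \<epsilon> * ((1 / (2 * \<epsilon>)) * (LINT x:{q i - \<epsilon>..q i + \<epsilon>}|lborel. f x)) * v (q i))
       = (\<Sum>i=1..N - 1. integral\<^sup>L lborel (\<lambda>x. indicator I01 x * (indicator (Jo i) x * f x)) * v (q i))"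
      using epos intJ by (intro sum.cong) auto
    also have "\<dots> = integral\<^sup>L lborel P"
      unfolding P_def by (subst Bochner_Integration.integral_sum) (auto intro: aI integrable_mult_left)
    finally show ?thesis .
  qed
  have Beq: "(LINT x:I01|lborel. chi q N \<epsilon> x * (f x * v x)) = integral\<^sup>L lborel Q"
    unfolding Q_def by (simp add: set_lebesgue_integral_def)
  have Weq: "(LINT x:I01|lborel. chi q N \<epsilon> x * \<bar>f x\<bar>) = integral\<^sup>L lborel W"
    unfolding W_def by (simp add: set_lebesgue_integral_def)
  have pw: "\<bar>P x - Q x\<bar> \<le> e * W x" for x
  proof (cases "x \<in> I01")
    case False then show ?thesis by (simp add: P_def Q_def W_def)
  next
    case True
    define R where "R = (\<Sum>i=1..N-1. indicator (Jo i) x * (v (q i) - v x))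
       - indicator {0<..<\<epsilon>} x * v x - indicator {1 - \<epsilon><..<1} x * v x"
    have Pa: "P x = f x * (\<Sum>i=1..N-1. indicator (Jo i) x * v (q i))"
      using True unfolding P_def sum_distrib_left by (intro sum.cong) (simp_all add: mult_ac)
    have Ra: "R = (\<Sum>i=1..N-1. indicator (Jo i) x * v (q i)) - (\<Sum>i=1..N-1. indicator (Jo i) x) * v x
       - indicator {0<..<\<epsilon>} x * v x - indicator {1 - \<epsilon><..<1} x * v x"
      by (simp add: R_def sum_subtractf sum_distrib_right right_diff_distrib)
    have Qa: "Q x = f x * ((\<Sum>i=1..N-1. indicator (Jo i) x) * v x + indicator {0<..<\<epsilon>} x * v x + indicator {1 - \<epsilon><..<1} x * v x)"
      unfolding Q_def chi_def Jo_def using True by (simp add: algebra_simps)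
    have "P x - Q x = f x * R"
      unfolding Pa Qa Ra by (simp add: algebra_simps)
    moreover have "\<bar>R\<bar> \<le> e * chi q N \<epsilon> x"
    proof -
      have t1: "\<bar>indicator (Jo i) x * (v (q i) - v x)\<bar> \<le> e * indicator (Jo i) x" if i: "i \<in> {1..N-1}" for i
      proof (cases "x \<in> Jo i")
        case True
        have "\<bar>v (q i) - v x\<bar> \<le> e"
          by (rule modc) (use qb[OF i] True \<open>x \<in> I01\<close> epos ed in \<open>auto simp: Jo_def\<close>)
        then show ?thesis using True by simp
      qed simp
      have t2: "\<bar>indicator {0<..<\<epsilon>} x * v x\<bar> \<le> e * indicator {0<..<\<epsilon>} x"
      proof (cases "x \<in> {0<..<\<epsilon>}")
        case True
        have "\<bar>v x - v 0\<bar> \<le> e"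
          by (rule modc) (use True \<open>x \<in> I01\<close> ed in auto)
        then show ?thesis using True v0 by simp
      qed simp
      have t3: "\<bar>indicator {1 - \<epsilon><..<1} x * v x\<bar> \<le> e * indicator {1 - \<epsilon><..<1} x"
      proof (cases "x \<in> {1 - \<epsilon><..<1}")
        case True
        have "\<bar>v x - v 1\<bar> \<le> e"
          by (rule modc) (use True \<open>x \<in> I01\<close> ed in auto)
        then show ?thesis using True v1 by simp
      qed simp
      have "\<bar>\<Sum>i=1..N-1. indicator (Jo i) x * (v (q i) - v x)\<bar> \<le> (\<Sum>i=1..N-1. \<bar>indicator (Jo i) x * (v (q i) - v x)\<bar>)"
        by (rule sum_abs)
      also have "\<dots> \<le> (\<Sum>i=1..N-1. e * indicator (Jo i) x)"
        by (rule sum_mono) (rule t1)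
      finally have "\<bar>\<Sum>i=1..N-1. indicator (Jo i) x * (v (q i) - v x)\<bar> \<le> e * (\<Sum>i=1..N-1. indicator (Jo i) x)"
        by (simp add: sum_distrib_left)
      then have "\<bar>R\<bar> \<le> e * (\<Sum>i=1..N-1. indicator (Jo i) x) + e * indicator {0<..<\<epsilon>} x + e * indicator {1 - \<epsilon><..<1} x"
        unfolding R_def using t2 t3 by linarith
      moreover have chiJ: "chi q N \<epsilon> x = (\<Sum>i=1..N-1. indicator (Jo i) x) + indicator {0<..<\<epsilon>} x + indicator {1 - \<epsilon><..<1} x"
        unfolding chi_def Jo_def by (rule refl)
      ultimately show ?thesis by (simp only: chiJ distrib_left)
    qed
    moreover have "W x = chi q N \<epsilon> x * \<bar>f x\<bar>" using True by (simp add: W_def)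
    ultimately have "\<bar>P x - Q x\<bar> = \<bar>f x\<bar> * \<bar>R\<bar>" and "\<bar>R\<bar> \<le> e * chi q N \<epsilon> x"
      and "W x = chi q N \<epsilon> x * \<bar>f x\<bar>" by (simp_all only: abs_mult)
    moreover have "\<bar>f x\<bar> * \<bar>R\<bar> \<le> \<bar>f x\<bar> * (e * chi q N \<epsilon> x)"
      by (rule mult_left_mono) (use calculation in auto)
    ultimately show ?thesis by (simp only: mult_ac)
  qed
  have "\<bar>integral\<^sup>L lborel P - integral\<^sup>L lborel Q\<bar> = \<bar>integral\<^sup>L lborel (\<lambda>x. P x - Q x)\<bar>"
    using PI QI by simp
  also have "\<dots> \<le> integral\<^sup>L lborel (\<lambda>x. \<bar>P x - Q x\<bar>)"
    by (rule integral_abs_bound)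
  also have "\<dots> \<le> integral\<^sup>L lborel (\<lambda>x. e * W x)"
    by (rule integral_mono) (use PI QI WI pw in auto)
  also have "\<dots> = e * integral\<^sup>L lborel W" by simp
  finally show ?thesis using Seq Beq Weq by simp
qed



theorem mainTheorem4:
  fixes f \<rho> :: "real \<Rightarrow> real"
    and \<epsilon> :: "nat \<Rightarrow> real"
    and N :: "nat \<Rightarrow> nat"
    and q :: "nat \<Rightarrow> nat \<Rightarrow> real"
  assumes f_L1: "set_integrable lborel I01 f"
    and eps_pos: "\<And>n. \<epsilon> n > 0"
    and eps_lim: "\<epsilon> \<longlonglongrightarrow> 0"
    and N_ge: "\<And>n. N n \<ge> 2"
    and feas: "\<And>n. feasible (q n) (N n) (\<epsilon> n)"
    and rho_Linf: "Linf_I \<rho>"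
    and conv: "weak_star_Linf (\<lambda>n. chi (q n) (N n) (\<epsilon> n)) \<rho>"
  shows "\<forall>v. H10 v \<longrightarrow>
    (\<lambda>n. \<Sum>i=1..N n - 1. 2 * \<epsilon> n *
        ((1 / (2 * \<epsilon> n)) * (LINT x:{q n i - \<epsilon> n..q n i + \<epsilon> n}|lborel. f x))
        * v (q n i))
    \<longlonglongrightarrow> (LINT x:I01|lborel. \<rho> x * f x * v x)"
proof (intro allI impI)
  fix v assume H: "H10 v"
  note vp = H10_props[OF H]
  have fI: "integrable lborel (\<lambda>x. indicator I01 x * f x)"
    using f_L1 unfolding set_integrable_def by simp
  have "continuous_on I01 v" using vp(1) by (rule continuous_on_subset) auto
  then have "(\<lambda>x. indicator I01 x *\<^sub>R v x) \<in> borel_measurable borel"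
    by (intro borel_measurable_continuous_on_indicator) auto
  then have vm: "(\<lambda>x. indicator I01 x * v x) \<in> borel_measurable lborel"
    by (simp add: measurable_lborel1)
  have "bounded (v ` {0..1})"
    by (intro compact_imp_bounded compact_continuous_image vp(1)) auto
  then obtain Bv where Bv: "\<And>x. x \<in> {0..1} \<Longrightarrow> \<bar>v x\<bar> \<le> Bv"
    unfolding bounded_real by (meson imageI)
  have uc: "uniformly_continuous_on {0..1} v"
    by (rule compact_uniformly_continuous[OF vp(1)]) auto
  have vb: "\<bar>v x\<bar> \<le> Bv" if "x \<in> I01" for x using Bv that by auto
  have fvI: "integrable lborel (\<lambda>x. indicator I01 x * (v x * f x))"
    by (rule int_bmult[where h=v, OF fI vm vb])
  have fvS: "set_integrable lborel I01 (\<lambda>x. f x * v x)"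
    using fvI unfolding set_integrable_def by (simp add: mult.commute)
  have afS: "set_integrable lborel I01 (\<lambda>x. \<bar>f x\<bar>)"
    using set_integrable_abs[OF f_L1] .
  define B where "B n = (LINT x:I01|lborel. chi (q n) (N n) (\<epsilon> n) x * (f x * v x))" for n
  define C where "C n = (LINT x:I01|lborel. chi (q n) (N n) (\<epsilon> n) x * \<bar>f x\<bar>)" for n
  define S where "S n = (\<Sum>i=1..N n - 1. 2 * \<epsilon> n *
        ((1 / (2 * \<epsilon> n)) * (LINT x:{q n i - \<epsilon> n..q n i + \<epsilon> n}|lborel. f x))
        * v (q n i))" for n
  have BL: "B \<longlonglongrightarrow> (LINT x:I01|lborel. \<rho> x * (f x * v x))"
    using conv fvS unfolding weak_star_Linf_def B_def by blast
  have CL: "C \<longlonglongrightarrow> (LINT x:I01|lborel. \<rho> x * \<bar>f x\<bar>)"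
    using conv afS unfolding weak_star_Linf_def C_def by blast
  then obtain M where M: "M > 0" "\<And>n. norm (C n) \<le> M"
    using convergent_imp_Bseq[of C] CL convergentI unfolding Bseq_def by metis
  have D0: "(\<lambda>n. S n - B n) \<longlonglongrightarrow> 0"
  proof (rule LIMSEQ_I)
    fix r :: real assume r: "r > 0"
    define e where "e = r / (2 * M)"
    have e: "e > 0" using r M by (simp add: e_def)
    obtain \<delta> where d: "\<delta> > 0" and dd: "\<And>x y. x \<in> {0..1} \<Longrightarrow> y \<in> {0..1} \<Longrightarrow> dist y x < \<delta> \<Longrightarrow> dist (v y) (v x) < e"
      using uc e unfolding uniformly_continuous_on_def by metis
    have modc: "\<bar>v x - v y\<bar> \<le> e" if "x \<in> {0..1}" "y \<in> {0..1}" "\<bar>x - y\<bar> < \<delta>" for x y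
      using dd[of y x] that by (simp add: dist_real_def)
    obtain no where no: "\<And>n. n \<ge> no \<Longrightarrow> norm (\<epsilon> n - 0) < \<delta>"
      using LIMSEQ_D[OF eps_lim d] by blast
    show "\<exists>no. \<forall>n\<ge>no. norm (S n - B n - 0) < r"
    proof (intro exI allI impI)
      fix n assume n: "n \<ge> no"
      have edn: "\<epsilon> n < \<delta>" using no[OF n] eps_pos[of n] by simp
      have "\<bar>S n - B n\<bar> \<le> e * C n"
        unfolding S_def B_def C_def
        by (rule key[OF feas eps_pos N_ge fI vm Bv vp(2) vp(3) modc edn])
      also have "\<dots> \<le> e * M" using M(2)[of n] e by (intro mult_left_mono) auto
      also have "\<dots> = r / 2" using M by (simp add: e_def)
      also have "\<dots> < r" using r by simp
      finally show "norm (S n - B n - 0) < r" by simp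
    qed
  qed
  have "(\<lambda>n. (S n - B n) + B n) \<longlonglongrightarrow> 0 + (LINT x:I01|lborel. \<rho> x * (f x * v x))"
    by (rule tendsto_add[OF D0 BL])
  then show "S \<longlonglongrightarrow> (LINT x:I01|lborel. \<rho> x * f x * v x)"
    by (simp add: mult.assoc)
qed


end
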